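(* Let $g\ge0$, $n\ge1$, $G\in\mathbb{G}_{g,n}$, and let $T_1,\dots,T_k$ be rational tails of $G$. If $H$ is a connected vertex-induced subgraph of $G$ with $V(H)\subseteq\bigcup_{i=1}^kV(T_i)$, then either $H\subseteq T_i$ for some $i$, or $V(G)=V(T_\ell)\cup V(T_r)$ for some $\ell,r$.
   Context: $\mathbb{G}_{g,n}$ is the set of isomorphism classes of dual graphs of stable $n$-pointed curves of genus $g$: connected graphs with vertex genera and $n$ labelled legs, of total genus $g$, each vertex stable. A vertex-induced subgraph is determined by a vertex set and contains all edges with both ends in that set and all legs rooted there. A tail is a connected vertex-induced subgraph joined to its complement by exactly one edge; a rational tail is a tail of genus $0$ (a tree all of whose vertices have genus $0$). *)

theory Defs
  imports Main "HOL-Library.Multiset"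
begin

text \<open>A (dual) graph is given by a vertex set V, an edge set E, an endpoint map
  ends (each edge has a multiset of two endpoints; loops are {#v,v#}),
  a vertex genus map gen, and leg map leg: leg i is the vertex at which the
  leg labelled i (1 \<le> i \<le> n) is rooted.  Multiple edges and loops are allowed.\<close>

definition induced_edges :: "'e set \<Rightarrow> ('e \<Rightarrow> 'v multiset) \<Rightarrow> 'v set \<Rightarrow> 'e set" where
  "induced_edges E ends S = {e \<in> E. set_mset (ends e) \<subseteq> S}"

definition induced_adj :: "'e set \<Rightarrow> ('e \<Rightarrow> 'v multiset) \<Rightarrow> 'v set \<Rightarrow> ('v \<times> 'v) set" where
  "induced_adj E ends S = {(x, y). \<exists>e \<in> induced_edges E ends S. ends e = {#x, y#}}"

definition induced_connected :: "'v set \<Rightarrow> 'e set \<Rightarrow> ('e \<Rightarrow> 'v multiset) \<Rightarrow> 'v set \<Rightarrow> bool" where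
  "induced_connected V E ends S \<longleftrightarrow> S \<noteq> {} \<and> S \<subseteq> V \<and>
     (\<forall>x \<in> S. \<forall>y \<in> S. (x, y) \<in> (induced_adj E ends S)\<^sup>*)"

definition boundary_edges :: "'v set \<Rightarrow> 'e set \<Rightarrow> ('e \<Rightarrow> 'v multiset) \<Rightarrow> 'v set \<Rightarrow> 'e set" where
  "boundary_edges V E ends S = {e \<in> E. \<exists>x \<in> S. \<exists>y \<in> V - S. ends e = {#x, y#}}"

definition valence :: "'e set \<Rightarrow> ('e \<Rightarrow> 'v multiset) \<Rightarrow> (nat \<Rightarrow> 'v) \<Rightarrow> nat \<Rightarrow> 'v \<Rightarrow> nat" where
  "valence E ends leg n v = (\<Sum>e \<in> E. count (ends e) v) + card {i \<in> {1..n}. leg i = v}"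

text \<open>G is (a representative of) an element of G_{g,n}: a connected graph with
  vertex genera and n labelled legs, of total genus g, every vertex stable.\<close>
definition stable_graph :: "nat \<Rightarrow> nat \<Rightarrow> 'v set \<Rightarrow> 'e set \<Rightarrow> ('e \<Rightarrow> 'v multiset)
    \<Rightarrow> ('v \<Rightarrow> nat) \<Rightarrow> (nat \<Rightarrow> 'v) \<Rightarrow> bool" where
  "stable_graph g n V E ends gen leg \<longleftrightarrow>
     finite V \<and> finite E \<and>
     (\<forall>e \<in> E. size (ends e) = 2 \<and> set_mset (ends e) \<subseteq> V) \<and>
     (\<forall>i \<in> {1..n}. leg i \<in> V) \<and>
     induced_connected V E ends V \<and>
     int g = int (\<Sum>v \<in> V. gen v) + int (card E) - int (card V) + 1 \<and>
     (\<forall>v \<in> V. 2 * gen v + valence E ends leg n v > 2)"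

definition is_tail :: "'v set \<Rightarrow> 'e set \<Rightarrow> ('e \<Rightarrow> 'v multiset) \<Rightarrow> 'v set \<Rightarrow> bool" where
  "is_tail V E ends S \<longleftrightarrow> induced_connected V E ends S \<and> card (boundary_edges V E ends S) = 1"

text \<open>Genus of a connected vertex-induced subgraph: sum of vertex genera plus first Betti number.\<close>
definition sub_genus :: "'e set \<Rightarrow> ('e \<Rightarrow> 'v multiset) \<Rightarrow> ('v \<Rightarrow> nat) \<Rightarrow> 'v set \<Rightarrow> int" where
  "sub_genus E ends gen S = int (\<Sum>v \<in> S. gen v) + int (card (induced_edges E ends S)) - int (card S) + 1"

definition is_rational_tail :: "'v set \<Rightarrow> 'e set \<Rightarrow> ('e \<Rightarrow> 'v multiset) \<Rightarrow> ('v \<Rightarrow> nat) \<Rightarrow> 'v set \<Rightarrow> bool" where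
  "is_rational_tail V E ends gen S \<longleftrightarrow> is_tail V E ends S \<and> sub_genus E ends gen S = 0"

end

theory Submission
  imports Defs
begin

lemma rtrancl_cross:
  assumes "(x, y) \<in> R\<^sup>*" "x \<in> A" "y \<notin> A"
  shows "\<exists>u v. (u, v) \<in> R \<and> u \<in> A \<and> v \<notin> A"
  using assms by (induction rule: rtrancl_induct) auto

lemma conn_cross:
  assumes "induced_connected V E ends S" "x \<in> S" "x \<in> A" "y \<in> S" "y \<notin> A"
  shows "\<exists>e\<in>E. \<exists>u v. ends e = {#u, v#} \<and> u \<in> S \<and> u \<in> A \<and> v \<in> S \<and> v \<notin> A"
proof -
  have "(x, y) \<in> (induced_adj E ends S)\<^sup>*"
    using assms(1,2,4) unfolding induced_connected_def by blast
  then obtain u v where uv: "(u, v) \<in> induced_adj E ends S" "u \<in> A" "v \<notin> A"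
    using rtrancl_cross[OF _ assms(3) assms(5)] by blast
  then obtain e where e: "e \<in> induced_edges E ends S" "ends e = {#u, v#}"
    unfolding induced_adj_def by auto
  then show ?thesis using uv unfolding induced_edges_def by auto
qed

lemma tail_unique:
  assumes "is_tail V E ends S" "e \<in> boundary_edges V E ends S" "e' \<in> boundary_edges V E ends S"
  shows "e = e'"
proof -
  from assms(1) have "card (boundary_edges V E ends S) = 1" unfolding is_tail_def by simp
  then obtain b where "boundary_edges V E ends S = {b}" by (rule card_1_singletonE)
  then show ?thesis using assms by auto
qed

lemma in_boundary:
  assumes "e \<in> E" "ends e = {#x, y#}" "x \<in> S" "y \<in> V" "y \<notin> S"
  shows "e \<in> boundary_edges V E ends S"
  using assms unfolding boundary_edges_def by blast

lemma closed_all: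
  assumes "induced_connected V E ends V" "S \<subseteq> V" "S \<noteq> {}"
    and "\<And>e x y. e \<in> E \<Longrightarrow> ends e = {#x, y#} \<Longrightarrow> x \<in> S \<Longrightarrow> y \<in> V \<Longrightarrow> y \<notin> S \<Longrightarrow> False"
  shows "S = V"
proof (rule ccontr)
  assume "S \<noteq> V"
  then obtain y where "y \<in> V" "y \<notin> S" using assms(2) by blast
  moreover obtain x where "x \<in> S" using assms(3) by blast
  ultimately obtain e u v where "e \<in> E" "ends e = {#u, v#}" "u \<in> S" "v \<in> V" "v \<notin> S"
    using conn_cross[OF assms(1), of x S y] assms(2) by blast
  then show False using assms(4) by blast
qed

lemma tail_sub: "is_tail V E ends S \<Longrightarrow> S \<subseteq> V \<and> S \<noteq> {}"
  unfolding is_tail_def induced_connected_def by blast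

lemma ends_mem: "(m::'a multiset) = {#x, y#} \<Longrightarrow> m = {#u, v#} \<Longrightarrow> y = u \<or> y = v"
proof -
  assume a: "m = {#x, y#}" "m = {#u, v#}"
  have "y \<in># m" using a(1) by simp
  then show ?thesis using a(2) by simp
qed

lemma union_closed:
  assumes conn: "induced_connected V E ends V"
    and t1: "is_tail V E ends T1" and t2: "is_tail V E ends T2"
    and b1: "\<And>e x y. e \<in> boundary_edges V E ends T1 \<Longrightarrow> ends e = {#x, y#} \<Longrightarrow> y \<in> T1 \<union> T2"
    and b2: "\<And>e x y. e \<in> boundary_edges V E ends T2 \<Longrightarrow> ends e = {#x, y#} \<Longrightarrow> y \<in> T1 \<union> T2"
  shows "T1 \<union> T2 = V"
proof (rule closed_all[OF conn])
  show "T1 \<union> T2 \<subseteq> V" "T1 \<union> T2 \<noteq> {}" using tail_sub[OF t1] tail_sub[OF t2] by auto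
  fix e x y assume e: "e \<in> E" "ends e = {#x, y#}" "x \<in> T1 \<union> T2" "y \<in> V" "y \<notin> T1 \<union> T2"
  show False
  proof (cases "x \<in> T1")
    case True
    then have "e \<in> boundary_edges V E ends T1" using e in_boundary by (metis UnCI)
    then show False using b1 e by blast
  next
    case False
    then have "x \<in> T2" using e by blast
    then have "e \<in> boundary_edges V E ends T2" using e in_boundary by (metis UnCI)
    then show False using b2 e by blast
  qed
qed

lemma laminar:
  assumes conn: "induced_connected V E ends V"
    and t1: "is_tail V E ends T1" and t2: "is_tail V E ends T2"
    and a: "a \<in> T1" "a \<in> T2" and b: "b \<in> T1" "b \<notin> T2" and c: "c \<in> T2" "c \<notin> T1"
  shows "T1 \<union> T2 = V"
proof -
  have c1: "induced_connected V E ends T1" and c2: "induced_connected V E ends T2"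
    using t1 t2 unfolding is_tail_def by auto
  obtain e1 u1 v1 where e1: "e1 \<in> E" "ends e1 = {#u1, v1#}" "u1 \<in> T1" "u1 \<in> T2" "v1 \<in> T1" "v1 \<notin> T2"
    using conn_cross[OF c1 a(1) a(2) b] by blast
  obtain e2 u2 v2 where e2: "e2 \<in> E" "ends e2 = {#u2, v2#}" "u2 \<in> T2" "u2 \<in> T1" "v2 \<in> T2" "v2 \<notin> T1"
    using conn_cross[OF c2 a(2) a(1) c] by blast
  have V1: "v1 \<in> V" "v2 \<in> V" using tail_sub[OF t1] tail_sub[OF t2] e1 e2 by auto
  have be2: "e2 \<in> boundary_edges V E ends T1" using e2 V1 unfolding boundary_edges_def by blast
  have be1: "e1 \<in> boundary_edges V E ends T2" using e1 V1 unfolding boundary_edges_def by blast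
  show ?thesis
  proof (rule union_closed[OF conn t1 t2])
    fix e x y assume "e \<in> boundary_edges V E ends T1" "ends e = {#x, y#}"
    then have "e = e2" using tail_unique[OF t1] be2 by blast
    then show "y \<in> T1 \<union> T2" using ends_mem[OF \<open>ends e = {#x, y#}\<close>] e2(2,4,5) by auto
  next
    fix e x y assume "e \<in> boundary_edges V E ends T2" "ends e = {#x, y#}"
    then have "e = e1" using tail_unique[OF t2] be1 by blast
    then show "y \<in> T1 \<union> T2" using ends_mem[OF \<open>ends e = {#x, y#}\<close>] e1(2,3,5) by auto
  qed
qed

theorem lemma4p14:
  fixes g n k :: nat and V :: "'v set" and E :: "'e set" and ends :: "'e \<Rightarrow> 'v multiset"
    and gen :: "'v \<Rightarrow> nat" and leg :: "nat \<Rightarrow> 'v" and T :: "nat \<Rightarrow> 'v set" and H :: "'v set"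
  assumes "n \<ge> 1"
    and "stable_graph g n V E ends gen leg"
    and "\<forall>i \<in> {1..k}. is_rational_tail V E ends gen (T i)"
    and "induced_connected V E ends H"
    and "H \<subseteq> (\<Union>i \<in> {1..k}. T i)"
  shows "(\<exists>i \<in> {1..k}. H \<subseteq> T i) \<or> (\<exists>l \<in> {1..k}. \<exists>r \<in> {1..k}. V = T l \<union> T r)"
proof (rule ccontr)
  assume neg: "\<not> ?thesis"
  have conn: "induced_connected V E ends V" and finV: "finite V"
    using assms(2) unfolding stable_graph_def by auto
  have tails: "\<And>i. i \<in> {1..k} \<Longrightarrow> is_tail V E ends (T i)"
    using assms(3) unfolding is_rational_tail_def by auto
  have HV: "H \<subseteq> V" "H \<noteq> {}" using assms(4) unfolding induced_connected_def by auto
  define C where "C = {i \<in> {1..k}. T i \<inter> H \<noteq> {}}"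
  obtain h0 where "h0 \<in> H" using HV by blast
  then obtain i0 where "i0 \<in> {1..k}" "h0 \<in> T i0" using assms(5) by blast
  then have "C \<noteq> {}" using \<open>h0 \<in> H\<close> unfolding C_def by blast
  moreover have "finite C" unfolding C_def by auto
  ultimately have "Max ((\<lambda>j. card (T j)) ` C) \<in> (\<lambda>j. card (T j)) ` C" by (intro Max_in) auto
  then obtain i where iC: "i \<in> C" and im: "card (T i) = Max ((\<lambda>j. card (T j)) ` C)" by auto
  have imax: "\<forall>j\<in>C. card (T j) \<le> card (T i)" unfolding im using \<open>finite C\<close> by auto
  have ik: "i \<in> {1..k}" using iC unfolding C_def by auto
  obtain h where h: "h \<in> H" "h \<in> T i" using iC unfolding C_def by auto
  have "\<not> H \<subseteq> T i" using neg ik by blast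
  then obtain w where w: "w \<in> H" "w \<notin> T i" by blast
  obtain e u v where e: "e \<in> E" "ends e = {#u, v#}" "u \<in> H" "u \<in> T i" "v \<in> H" "v \<notin> T i"
    using conn_cross[OF assms(4) h w] by blast
  obtain j where jk: "j \<in> {1..k}" and vj: "v \<in> T j" using e(5) assms(5) by blast
  have jC: "j \<in> C" using jk vj e unfolding C_def by auto
  have ti: "is_tail V E ends (T i)" and tj: "is_tail V E ends (T j)" using tails ik jk by auto
  have beI: "e \<in> boundary_edges V E ends (T i)" using e HV unfolding boundary_edges_def by blast
  show False
  proof (cases "u \<in> T j")
    case True
    have "T i \<subseteq> T j"
    proof (rule ccontr)
      assume "\<not> T i \<subseteq> T j"
      then obtain b where "b \<in> T i" "b \<notin> T j" by blast
      then have "T i \<union> T j = V" using laminar[OF conn ti tj e(4) True _ _ vj e(6)] by blast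
      then show False using neg ik jk by blast
    qed
    then have "T i \<subset> T j" using vj e(6) by blast
    moreover have "finite (T j)" using tail_sub[OF tj] finV finite_subset by blast
    ultimately have "card (T i) < card (T j)" by (rule psubset_card_mono[rotated])
    then show False using imax jC by force
  next
    case False
    have ends': "ends e = {#v, u#}" using e(2) by (simp add: add_mset_commute)
    have beJ: "e \<in> boundary_edges V E ends (T j)" using e ends' vj False HV unfolding boundary_edges_def by blast
    have "T i \<union> T j = V"
    proof (rule union_closed[OF conn ti tj])
      fix e' x y assume "e' \<in> boundary_edges V E ends (T i)" "ends e' = {#x, y#}"
      then have "e' = e" using tail_unique[OF ti] beI by blast
      then show "y \<in> T i \<union> T j" using ends_mem[OF \<open>ends e' = {#x, y#}\<close>] e(2,4) vj by auto
    next
      fix e' x y assume "e' \<in> boundary_edges V E ends (T j)" "ends e' = {#x, y#}"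
      then have "e' = e" using tail_unique[OF tj] beJ by blast
      then show "y \<in> T i \<union> T j" using ends_mem[OF \<open>ends e' = {#x, y#}\<close>] e(2,4) vj by auto
    qed
    then show False using neg ik jk by blast
  qed
qed

end
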